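(* Let $f:\mathbb{R}^d\to\mathbb{R}$ be convex, and suppose there exist $\boldsymbol x^\star\in\mathbb{R}^d$, $\rho>0$ and $r>0$ such that $f$ is twice differentiable on $B(\boldsymbol x^\star,r)$ with $\nabla^2f(\boldsymbol x)\succeq\rho\boldsymbol I$ for all $\boldsymbol x\in B(\boldsymbol x^\star,r)$. Then $$f(\boldsymbol x)\ge f(\boldsymbol x^\star)+\langle\nabla f(\boldsymbol x^\star),\boldsymbol x-\boldsymbol x^\star\rangle+\rho\,H(\|\boldsymbol x-\boldsymbol x^\star\|_2),\qquad\forall\boldsymbol x\in\mathbb{R}^d,$$ where $H(x)=x^2/2$ if $0\le x\le r$ and $H(x)=r(x-r/2)$ if $x>r$.
   Context: $B(\boldsymbol x,r)$ is the closed Euclidean ball. *)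

theory Defs
  imports "HOL-Analysis.Analysis"
begin

definition grad :: "('a::euclidean_space \<Rightarrow> real) \<Rightarrow> 'a \<Rightarrow> 'a" where
  "grad f x = (\<Sum>b\<in>Basis. frechet_derivative f (at x) b *\<^sub>R b)"

definition twice_differentiable_at :: "('a::euclidean_space \<Rightarrow> real) \<Rightarrow> 'a \<Rightarrow> bool" where
  "twice_differentiable_at f x \<longleftrightarrow>
     (\<forall>\<^sub>F y in nhds x. f differentiable (at y)) \<and> grad f differentiable (at x)"

definition hessian :: "('a::euclidean_space \<Rightarrow> real) \<Rightarrow> 'a \<Rightarrow> 'a \<Rightarrow> 'a" where
  "hessian f x = frechet_derivative (grad f) (at x)"

definition Hfun :: "real \<Rightarrow> real \<Rightarrow> real" where
  "Hfun r t = (if t \<le> r then t\<^sup>2 / 2 else r * (t - r / 2))"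

end

theory Submission
  imports Defs
begin


lemma grad_deriv:
  fixes f :: "'a::euclidean_space \<Rightarrow> real"
  assumes "f differentiable (at y)"
  shows "(f has_derivative (\<lambda>v. grad f y \<bullet> v)) (at y)"
proof -
  let ?D = "frechet_derivative f (at y)"
  have hd: "(f has_derivative ?D) (at y)" using assms frechet_derivative_works by blast
  have lin: "linear ?D" using hd has_derivative_linear by blast
  have "?D v = grad f y \<bullet> v" for v
  proof -
    have "?D v = ?D (\<Sum>b\<in>Basis. (v \<bullet> b) *\<^sub>R b)" by (simp add: euclidean_representation)
    also have "\<dots> = (\<Sum>b\<in>Basis. (v \<bullet> b) * ?D b)" using lin by (simp add: linear_sum linear_scale)
    also have "\<dots> = grad f y \<bullet> v" unfolding grad_def inner_sum_left
      by (rule sum.cong) (simp_all add: inner_commute)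
    finally show ?thesis .
  qed
  then have "?D = (\<lambda>v. grad f y \<bullet> v)" by auto
  then show ?thesis using hd by simp
qed

lemma line_deriv:
  fixes f :: "'a::euclidean_space \<Rightarrow> real"
  assumes "f differentiable (at (a + s *\<^sub>R u))"
  shows "((\<lambda>s. f (a + s *\<^sub>R u)) has_real_derivative (grad f (a + s *\<^sub>R u) \<bullet> u)) (at s)"
proof -
  have l: "((\<lambda>s. a + s *\<^sub>R u) has_derivative (\<lambda>h. h *\<^sub>R u)) (at s)"
    by (auto intro!: derivative_eq_intros)
  have "((\<lambda>s. f (a + s *\<^sub>R u)) has_derivative (\<lambda>h. grad f (a + s *\<^sub>R u) \<bullet> (h *\<^sub>R u))) (at s)"
    using has_derivative_compose[OF l grad_deriv[OF assms]] by (simp add: o_def)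
  moreover have "(\<lambda>h. h * c) = (*) c" for c :: real by (rule ext) simp
  ultimately show ?thesis unfolding has_field_derivative_def by simp
qed

lemma line_deriv2:
  fixes f :: "'a::euclidean_space \<Rightarrow> real"
  assumes "grad f differentiable (at (a + s *\<^sub>R u))"
  shows "((\<lambda>s. grad f (a + s *\<^sub>R u) \<bullet> u) has_real_derivative (u \<bullet> hessian f (a + s *\<^sub>R u) u)) (at s)"
proof -
  let ?y = "a + s *\<^sub>R u"
  have hd: "(grad f has_derivative hessian f ?y) (at ?y)"
    using assms frechet_derivative_works unfolding hessian_def by blast
  have lin: "linear (hessian f ?y)" using hd has_derivative_linear by blast
  have l: "((\<lambda>s. a + s *\<^sub>R u) has_derivative (\<lambda>h. h *\<^sub>R u)) (at s)"
    by (auto intro!: derivative_eq_intros)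
  have "((\<lambda>s. grad f (a + s *\<^sub>R u)) has_derivative (\<lambda>h. hessian f ?y (h *\<^sub>R u))) (at s)"
    using has_derivative_compose[OF l hd] by (simp add: o_def)
  then have "((\<lambda>s. grad f (a + s *\<^sub>R u) \<bullet> u) has_derivative (\<lambda>h. hessian f ?y (h *\<^sub>R u) \<bullet> u)) (at s)"
    by (auto intro!: derivative_eq_intros)
  moreover have "(\<lambda>h. h * c) = (*) c" for c :: real by (rule ext) simp
  ultimately show ?thesis unfolding has_field_derivative_def
    using lin by (simp add: linear_scale inner_commute)
qed

lemma tangent:
  fixes f :: "'a::euclidean_space \<Rightarrow> real"
  assumes cv: "convex_on UNIV f" and d: "f differentiable (at y)"
  shows "f z \<ge> f y + grad f y \<bullet> (z - y)"
proof -
  define k where "k s = f (y + s *\<^sub>R (z - y))" for s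
  have ck: "convex_on UNIV k"
  proof (rule convex_onI)
    fix t x w :: real assume "t > 0" "t < 1"
    have "y + ((1 - t) * x + t * w) *\<^sub>R (z - y) = (1 - t) *\<^sub>R (y + x *\<^sub>R (z - y)) + t *\<^sub>R (y + w *\<^sub>R (z - y))"
      by (simp add: algebra_simps)
    then show "k ((1 - t) *\<^sub>R x + t *\<^sub>R w) \<le> (1 - t) * k x + t * k w"
      unfolding k_def using convex_onD[OF cv, of t] \<open>t>0\<close> \<open>t<1\<close> by simp
  qed simp
  have "(k has_real_derivative (grad f y \<bullet> (z - y))) (at 0)"
    unfolding k_def using line_deriv[of f y 0 "z - y"] d by simp
  from convex_on_imp_above_tangent[OF ck _ _ _ this, of 1]
  have "k 1 - k 0 \<ge> grad f y \<bullet> (z - y)" by simp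
  then show ?thesis unfolding k_def by simp
qed


theorem lemmaE5:
  fixes f :: "'a::euclidean_space \<Rightarrow> real" and xs :: 'a and \<rho> r :: real
  assumes "convex_on UNIV f"
    and "\<rho> > 0" and "r > 0"
    and "\<forall>x\<in>cball xs r. twice_differentiable_at f x"
    and "\<forall>x\<in>cball xs r. \<forall>v. v \<bullet> hessian f x v \<ge> \<rho> * (v \<bullet> v)"
  shows "\<forall>x. f x \<ge> f xs + grad f xs \<bullet> (x - xs) + \<rho> * Hfun r (norm (x - xs))"
proof
  fix x
  show "f x \<ge> f xs + grad f xs \<bullet> (x - xs) + \<rho> * Hfun r (norm (x - xs))"
  proof (cases "x = xs")
    case True
    then show ?thesis using \<open>r > 0\<close> by (simp add: Hfun_def)
  next
    case False
    define t where "t = norm (x - xs)"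
    have tpos: "t > 0" using False t_def by simp
    define u where "u = (1 / t) *\<^sub>R (x - xs)"
    have uu: "u \<bullet> u = 1" unfolding u_def t_def using tpos t_def
      by (simp add: inner_commute power2_norm_eq_inner[symmetric] power2_eq_square)
    have xeq: "x = xs + t *\<^sub>R u" unfolding u_def using tpos by simp
    have nu: "norm u = 1" using uu by (simp add: norm_eq_sqrt_inner)
    have inb: "xs + s *\<^sub>R u \<in> cball xs r" if "0 \<le> s" "s \<le> r" for s
      using that nu by (simp add: dist_norm)
    have td: "twice_differentiable_at f (xs + s *\<^sub>R u)" if "0 \<le> s" "s \<le> r" for s
      using assms(4) inb[OF that] by blast
    have d1: "f differentiable (at (xs + s *\<^sub>R u))" if "0 \<le> s" "s \<le> r" for s
      using td[OF that] unfolding twice_differentiable_at_def using eventually_nhds_x_imp_x by blast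
    have d2: "grad f differentiable (at (xs + s *\<^sub>R u))" if "0 \<le> s" "s \<le> r" for s
      using td[OF that] unfolding twice_differentiable_at_def by blast
    define gd where "gd s = grad f (xs + s *\<^sub>R u) \<bullet> u" for s
    have step1: "gd s - \<rho> * s \<ge> gd 0 - \<rho> * 0" if "0 \<le> s" "s \<le> r" for s
    proof (rule DERIV_nonneg_imp_nondecreasing[OF that(1)])
      fix z assume z: "0 \<le> z" "z \<le> s"
      have "((\<lambda>s. gd s - \<rho> * s) has_real_derivative (u \<bullet> hessian f (xs + z *\<^sub>R u) u - \<rho>)) (at z)"
        unfolding gd_def using z that
        by (auto intro!: derivative_eq_intros line_deriv2 d2)
      moreover have "u \<bullet> hessian f (xs + z *\<^sub>R u) u - \<rho> \<ge> 0"
      proof -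
        have "xs + z *\<^sub>R u \<in> cball xs r" using inb[of z] z that by simp
        then have "u \<bullet> hessian f (xs + z *\<^sub>R u) u \<ge> \<rho> * (u \<bullet> u)" using assms(5) by blast
        then show ?thesis using uu by simp
      qed
      ultimately show "\<exists>y. ((\<lambda>s. gd s - \<rho> * s) has_real_derivative y) (at z) \<and> 0 \<le> y" by blast
    qed
    define \<phi> where "\<phi> s = f (xs + s *\<^sub>R u) - gd 0 * s - \<rho> * s\<^sup>2 / 2" for s
    have step2: "\<phi> s \<ge> \<phi> 0" if "0 \<le> s" "s \<le> r" for s
    proof (rule DERIV_nonneg_imp_nondecreasing[OF that(1)])
      fix z assume z: "0 \<le> z" "z \<le> s"
      have "(\<phi> has_real_derivative (gd z - gd 0 - \<rho> * z)) (at z)"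
        unfolding \<phi>_def gd_def using z that
        by (auto intro!: derivative_eq_intros line_deriv[of f xs z u, simplified] d1)
      moreover have "gd z - gd 0 - \<rho> * z \<ge> 0" using step1[of z] z that by simp
      ultimately show "\<exists>y. (\<phi> has_real_derivative y) (at z) \<and> 0 \<le> y" by blast
    qed
    have g0: "grad f xs \<bullet> (x - xs) = gd 0 * t" unfolding gd_def xeq by simp
    show ?thesis
    proof (cases "t \<le> r")
      case True
      have "\<phi> t \<ge> \<phi> 0" using step2[of t] True tpos by simp
      then show ?thesis using True unfolding \<phi>_def Hfun_def g0 t_def[symmetric]
        by (simp add: xeq[symmetric])
    next
      case False
      let ?y = "xs + r *\<^sub>R u"
      have tan: "f x \<ge> f ?y + grad f ?y \<bullet> (x - ?y)"
        using tangent[OF assms(1) d1[of r]] assms(3) by simp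
      have "x - ?y = (t - r) *\<^sub>R u" unfolding xeq by (simp add: algebra_simps)
      then have e: "grad f ?y \<bullet> (x - ?y) = gd r * (t - r)" unfolding gd_def by simp
      have p: "\<phi> r \<ge> \<phi> 0" using step2[of r] assms(3) by simp
      have s1: "gd r \<ge> gd 0 + \<rho> * r" using step1[of r] assms(3) by simp
      have "gd r * (t - r) \<ge> (gd 0 + \<rho> * r) * (t - r)"
        using s1 False by (intro mult_right_mono) auto
      then have "f x \<ge> f xs + gd 0 * r + \<rho> * r\<^sup>2 / 2 + (gd 0 + \<rho> * r) * (t - r)"
        using tan e p unfolding \<phi>_def by simp
      moreover have "f xs + gd 0 * r + \<rho> * r\<^sup>2 / 2 + (gd 0 + \<rho> * r) * (t - r)
          = f xs + gd 0 * t + \<rho> * (r * (t - r / 2))"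
        by (simp add: algebra_simps power2_eq_square)
      ultimately show ?thesis using False unfolding Hfun_def g0 t_def[symmetric] by simp
    qed
  qed
qed

end
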